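(* Let $P=(p_{i,j})_{i,j=1}^N$ be an irreducible stochastic matrix, let $(X_m)_{m\ge0}$ be the Markov chain with transition matrix $P$, and let $p^n_{i,j}$ and $s_n$ be the GTH elimination quantities. For $2\le n\le N$, let $\tau_n=\inf\{m\ge1: X_m\in\{1,\dots,n-1\}\}$. Define: - for $1\le i<n$, $r_{i,n}=\mathbb E_i\big[\#\{m: 1\le m<\tau_n,\ X_m=n\}\big]$, the expected number of visits to $n$ before returning to $\{1,\dots,n-1\}$, starting from $i$; - for $1\le j<n$, $g_{n,j}=\mathbb P_n(X_{\tau_n}=j)$, the probability that, starting from $n$, the first state visited in $\{1,\dots,n-1\}$ is $j$; - for $1\le n\le N$, $\psi_n=p^n_{n,n}$; in particular $\psi_1=p^1_{1,1}=1$. Then, for $2\le n\le N$ and $1\le i,j\le n-1$, $$r_{i,n}=\frac{p^n_{i,n}}{s_n},\qquad g_{n,j}=\frac{p^n_{n,j}}{s_n}.$$ Moreover, $$I-P=(I-R_U)(I-\Psi_D)(I-G_L),$$ where: - $R_U$ is the $N\times N$ strictly upper triangular matrix with $(i,n)$ entry $r_{i,n}$ for $i<n$; - $\Psi_D=\mathrm{diag}(\psi_1,\dots,\psi_N)$; - $G_L$ is the $N\times N$ strictly lower triangular matrix with $(n,j)$ entry $g_{n,j}$ for $j<n$.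
   Context: GTH elimination: set $p^N_{i,j}=p_{i,j}$ for $1\le i,j\le N$. For $n=N,N-1,\dots,2$, set $s_n=\sum_{k=1}^{n-1}p^n_{n,k}$ and $$p^{n-1}_{i,j}=p^n_{i,j}+\frac{p^n_{i,n}p^n_{n,j}}{s_n}\qquad\text{for }1\le i,j\le n-1.$$ Irreducibility of $P$ guarantees that $s_n>0$ for all $n$. $\mathbb E_i$ and $\mathbb P_i$ denote expectation and probability for the chain started at $X_0=i$. *)

theory Defs
  imports Complex_Main
begin

text \<open>States are 1..N; a matrix is a function nat \<Rightarrow> nat \<Rightarrow> real, only entries
  with indices in {1..N} matter.\<close>

definition stochastic_matrix :: "nat \<Rightarrow> (nat \<Rightarrow> nat \<Rightarrow> real) \<Rightarrow> bool" where
  "stochastic_matrix N P \<longleftrightarrow>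
     (\<forall>i\<in>{1..N}. \<forall>j\<in>{1..N}. P i j \<ge> 0) \<and> (\<forall>i\<in>{1..N}. (\<Sum>j=1..N. P i j) = 1)"

definition irreducible_matrix :: "nat \<Rightarrow> (nat \<Rightarrow> nat \<Rightarrow> real) \<Rightarrow> bool" where
  "irreducible_matrix N P \<longleftrightarrow>
     (\<forall>i\<in>{1..N}. \<forall>j\<in>{1..N}.
        (i, j) \<in> {(a, b). a \<in> {1..N} \<and> b \<in> {1..N} \<and> P a b > 0}\<^sup>+)"

definition gth_step :: "nat \<Rightarrow> (nat \<Rightarrow> nat \<Rightarrow> real) \<Rightarrow> nat \<Rightarrow> nat \<Rightarrow> real" where
  "gth_step n q = (\<lambda>i j. q i j + q i n * q n j / (\<Sum>k=1..<n. q n k))"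

primrec gth_iter :: "(nat \<Rightarrow> nat \<Rightarrow> real) \<Rightarrow> nat \<Rightarrow> nat \<Rightarrow> nat \<Rightarrow> nat \<Rightarrow> real" where
  "gth_iter P N 0 = P"
| "gth_iter P N (Suc k) = gth_step (N - k) (gth_iter P N k)"

text \<open>gth P N n i j = p^n_{i,j} (for 1 \<le> n \<le> N).\<close>
definition gth :: "(nat \<Rightarrow> nat \<Rightarrow> real) \<Rightarrow> nat \<Rightarrow> nat \<Rightarrow> nat \<Rightarrow> nat \<Rightarrow> real" where
  "gth P N n = gth_iter P N (N - n)"

definition gth_s :: "(nat \<Rightarrow> nat \<Rightarrow> real) \<Rightarrow> nat \<Rightarrow> nat \<Rightarrow> real" where
  "gth_s P N n = (\<Sum>k=1..<n. gth P N n n k)"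

text \<open>Markov chain started at i: P_i(X_1 = x_1, ..., X_m = x_m) = p_{i,x_1} ... p_{x_{m-1},x_m}.\<close>
fun path_prob :: "(nat \<Rightarrow> nat \<Rightarrow> real) \<Rightarrow> nat \<Rightarrow> nat list \<Rightarrow> real" where
  "path_prob P i [] = 1"
| "path_prob P i (x # xs) = P i x * path_prob P x xs"

text \<open>Probability P_i(X_m = n and m < tau_n), i.e. X_1..X_m avoid {1..n-1} and X_m = n.\<close>
definition visit_prob :: "nat \<Rightarrow> (nat \<Rightarrow> nat \<Rightarrow> real) \<Rightarrow> nat \<Rightarrow> nat \<Rightarrow> nat \<Rightarrow> real" where
  "visit_prob N P n i m =
     (\<Sum>xs\<in>{xs. length xs = m \<and> set xs \<subseteq> {1..N} \<and> set xs \<inter> {1..<n} = {} \<and> last xs = n}.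
        path_prob P i xs)"

text \<open>r_{i,n} = E_i[#{m : 1 \<le> m < tau_n, X_m = n}] = sum_{m\<ge>1} P_i(X_m = n, m < tau_n).\<close>
definition r_visits :: "nat \<Rightarrow> (nat \<Rightarrow> nat \<Rightarrow> real) \<Rightarrow> nat \<Rightarrow> nat \<Rightarrow> real" where
  "r_visits N P i n = (\<Sum>m. visit_prob N P n i (Suc m))"

text \<open>Probability P_n(tau_n = m, X_m = j).\<close>
definition exit_prob :: "nat \<Rightarrow> (nat \<Rightarrow> nat \<Rightarrow> real) \<Rightarrow> nat \<Rightarrow> nat \<Rightarrow> nat \<Rightarrow> real" where
  "exit_prob N P n j m =
     (\<Sum>xs\<in>{xs. length xs = m \<and> set xs \<subseteq> {1..N} \<and> set (butlast xs) \<inter> {1..<n} = {} \<and> last xs = j}.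
        path_prob P n xs)"

text \<open>g_{n,j} = P_n(X_{tau_n} = j) = sum_{m\<ge>1} P_n(tau_n = m, X_m = j).\<close>
definition g_exit :: "nat \<Rightarrow> (nat \<Rightarrow> nat \<Rightarrow> real) \<Rightarrow> nat \<Rightarrow> nat \<Rightarrow> real" where
  "g_exit N P n j = (\<Sum>m. exit_prob N P n j (Suc m))"

definition idm :: "nat \<Rightarrow> nat \<Rightarrow> real" where
  "idm i j = (if i = j then 1 else 0)"

definition R_U :: "nat \<Rightarrow> (nat \<Rightarrow> nat \<Rightarrow> real) \<Rightarrow> nat \<Rightarrow> nat \<Rightarrow> real" where
  "R_U N P i n = (if i < n then r_visits N P i n else 0)"

definition Psi_D :: "nat \<Rightarrow> (nat \<Rightarrow> nat \<Rightarrow> real) \<Rightarrow> nat \<Rightarrow> nat \<Rightarrow> real" where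
  "Psi_D N P i j = (if i = j then gth P N i i i else 0)"

definition G_L :: "nat \<Rightarrow> (nat \<Rightarrow> nat \<Rightarrow> real) \<Rightarrow> nat \<Rightarrow> nat \<Rightarrow> real" where
  "G_L N P n j = (if j < n then g_exit N P n j else 0)"

definition matmul :: "nat \<Rightarrow> (nat \<Rightarrow> nat \<Rightarrow> real) \<Rightarrow> (nat \<Rightarrow> nat \<Rightarrow> real) \<Rightarrow> nat \<Rightarrow> nat \<Rightarrow> real" where
  "matmul N A B = (\<lambda>i j. \<Sum>k=1..N. A i k * B k j)"

end

theory Submission
  imports Defs
begin


lemma conv_bound:
  fixes a b :: "nat \<Rightarrow> real"
  assumes "\<And>k. 0 \<le> a k" "\<And>k. 0 \<le> b k"
  shows "(\<Sum>k<M. \<Sum>t\<le>k. a t * b (k - t)) \<le> (\<Sum>t<M. a t) * (\<Sum>s<M. b s)"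
proof -
  have "(\<Sum>k<M. \<Sum>t\<le>k. a t * b (k - t)) = (\<Sum>(t,s)\<in>{(t,s). t+s < M}. a t * b s)"
    by (rule sum.triangle_reindex[symmetric])
  also have "\<dots> \<le> (\<Sum>(t,s)\<in>{..<M}\<times>{..<M}. a t * b s)"
    by (rule sum_mono2) (auto simp: assms)
  also have "\<dots> = (\<Sum>t<M. a t) * (\<Sum>s<M. b s)"
    by (simp add: sum_product sum.cartesian_product)
  finally show ?thesis .
qed

lemma conv_summable:
  fixes a b x :: "nat \<Rightarrow> real"
  assumes a0: "\<And>k. 0 \<le> a k" and b0: "\<And>k. 0 \<le> b k" and x0: "\<And>k. 0 \<le> x k"
    and as: "a sums c" and c1: "c < 1" and xs: "summable x"
    and bz: "b 0 = x 0" and bs: "\<And>k. b (Suc k) = x (Suc k) + (\<Sum>t\<le>k. a t * b (k - t))"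
  shows "summable b"
proof (rule summableI_nonneg_bounded[where x="suminf x / (1 - c)"])
  show "0 \<le> b n" for n by (rule b0)
  have Bsuc: "(\<Sum>k<Suc M. b k) \<le> suminf x + c * (\<Sum>k<M. b k)" for M
  proof -
    have "(\<Sum>k<Suc M. b k) = b 0 + (\<Sum>k<M. b (Suc k))" by (rule sum.lessThan_Suc_shift)
    also have "\<dots> = (\<Sum>k<Suc M. x k) + (\<Sum>k<M. \<Sum>t\<le>k. a t * b (k - t))"
      by (simp add: bz bs sum.distrib sum.lessThan_Suc_shift del: sum.lessThan_Suc)
    also have "\<dots> \<le> suminf x + (\<Sum>t<M. a t) * (\<Sum>s<M. b s)"
      by (intro add_mono conv_bound sum_le_suminf xs) (auto simp: a0 b0 x0)
    also have "(\<Sum>t<M. a t) \<le> c"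
      using as by (metis a0 sum_le_suminf sums_iff finite_lessThan)
    hence "(\<Sum>t<M. a t) * (\<Sum>s<M. b s) \<le> c * (\<Sum>s<M. b s)"
      by (intro mult_right_mono sum_nonneg) (auto simp: b0)
    finally show ?thesis by simp
  qed
  have c0: "0 \<le> c" using as a0 by (metis sums_le sums_zero)
  show "(\<Sum>k<M. b k) \<le> suminf x / (1 - c)" for M
  proof (cases M)
    case 0 then show ?thesis using c1 x0 xs by (simp add: suminf_nonneg)
  next
    case (Suc M')
    have "(\<Sum>k<M'. b k) \<le> (\<Sum>k<Suc M'. b k)" by (simp add: b0)
    hence "(\<Sum>k<Suc M'. b k) \<le> suminf x + c * (\<Sum>k<Suc M'. b k)"
      using Bsuc[of M'] c0 by (meson mult_left_mono order_trans add_left_mono)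
    hence "(1 - c) * (\<Sum>k<Suc M'. b k) \<le> suminf x" by (simp add: algebra_simps)
    then show ?thesis using Suc c1 by (simp add: field_simps)
  qed
qed

lemma conv_sums:
  fixes a b x y :: "nat \<Rightarrow> real"
  assumes a0: "\<And>k. 0 \<le> a k" and b0: "\<And>k. 0 \<le> b k"
    and as: "a sums \<alpha>" and bsm: "b sums \<beta>" and xs: "x sums \<xi>"
    and yz: "y 0 = x 0" and ys: "\<And>k. y (Suc k) = x (Suc k) + (\<Sum>t\<le>k. a t * b (k - t))"
  shows "y sums (\<xi> + \<alpha> * \<beta>)"
proof -
  have "(\<lambda>k. \<Sum>i\<le>k. a i * b (k - i)) sums ((\<Sum>k. a k) * (\<Sum>k. b k))"
    by (rule Cauchy_product_sums) (use as bsm a0 b0 in \<open>auto simp: sums_iff\<close>)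
  hence cs: "(\<lambda>k. \<Sum>i\<le>k. a i * b (k - i)) sums (\<alpha> * \<beta>)"
    using as bsm by (simp add: sums_iff)
  have "(\<lambda>k. x (Suc k)) sums (\<xi> - x 0)" using xs by (simp add: sums_Suc_iff)
  hence "(\<lambda>k. y (Suc k)) sums (\<xi> - x 0 + \<alpha> * \<beta>)"
    using sums_add[OF _ cs] by (simp add: ys)
  thus ?thesis by (simp add: sums_Suc_iff yz)
qed



fun V :: "(nat \<Rightarrow> nat \<Rightarrow> real) \<Rightarrow> nat set \<Rightarrow> nat \<Rightarrow> nat \<Rightarrow> nat \<Rightarrow> real" where
  "V P A i j 0 = 0"
| "V P A i j (Suc 0) = P i j"
| "V P A i j (Suc (Suc m)) = (\<Sum>x\<in>A. P i x * V P A x j (Suc m))"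

lemma V_nonneg:
  assumes "\<forall>i\<in>{1..N}. \<forall>j\<in>{1..N}. P i j \<ge> 0" "A \<subseteq> {1..N}" "i\<in>{1..N}" "j \<in> {1..N}"
  shows "V P A i j m \<ge> 0"
  using assms
proof (induction P A i j m rule: V.induct)
  case (3 P A i j m)
  then show ?case by (auto intro!: sum_nonneg mult_nonneg_nonneg)
qed auto

lemma set_butlast_last: "xs \<noteq> [] \<Longrightarrow> set xs = insert (last xs) (set (butlast xs))"
  by (metis append_butlast_last_id insert_is_Un list.set(2) set_append set_empty2 Un_commute empty_set)

lemma paths_eq_V:
  assumes "finite A"
  shows "(\<Sum>xs\<in>{xs. length xs = Suc m \<and> set (butlast xs) \<subseteq> A \<and> last xs = j}. path_prob P i xs)
         = V P A i j (Suc m)"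
proof (induction m arbitrary: i)
  case 0
  have "{xs. length xs = Suc 0 \<and> set (butlast xs) \<subseteq> A \<and> last xs = j} = {[j]}"
    by (auto simp: length_Suc_conv)
  then show ?case by simp
next
  case (Suc m)
  define S where "S = (\<lambda>m. {xs. length xs = Suc m \<and> set (butlast xs) \<subseteq> A \<and> last xs = j})"
  have eq: "S (Suc m) = (\<lambda>(x,ys). x#ys) ` (A \<times> S m)"
  proof (rule set_eqI, rule iffI)
    fix xs assume "xs \<in> S (Suc m)"
    then obtain x ys where xs: "xs = x # ys" and l: "length ys = Suc m" and
      b: "set (butlast (x#ys)) \<subseteq> A" and la: "last (x#ys) = j"
      unfolding S_def by (auto simp: length_Suc_conv)
    have "ys \<noteq> []" using l by auto
    then show "xs \<in> (\<lambda>(x,ys). x#ys) ` (A \<times> S m)"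
      using xs l b la unfolding S_def by (auto intro!: image_eqI[where x="(x,ys)"])
  next
    fix xs assume "xs \<in> (\<lambda>(x,ys). x#ys) ` (A \<times> S m)"
    then obtain x ys where xs: "xs = x # ys" and x: "x \<in> A" and ys: "ys \<in> S m" by auto
    have "ys \<noteq> []" using ys unfolding S_def by auto
    then show "xs \<in> S (Suc m)" using xs x ys unfolding S_def by auto
  qed
  have inj: "inj_on (\<lambda>(x,ys). x#ys) (A \<times> S m)" by (auto simp: inj_on_def)
  have fin: "finite (S m)"
  proof (rule finite_subset)
    show "S m \<subseteq> {xs. set xs \<subseteq> insert j A \<and> length xs = Suc m}"
    proof
      fix xs assume a: "xs \<in> S m"
      hence "xs \<noteq> []" unfolding S_def by auto
      then show "xs \<in> {xs. set xs \<subseteq> insert j A \<and> length xs = Suc m}"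
        using a set_butlast_last[of xs] unfolding S_def by auto
    qed
    show "finite {xs. set xs \<subseteq> insert j A \<and> length xs = Suc m}"
      using assms by (intro finite_lists_length_eq) auto
  qed
  have "(\<Sum>xs\<in>S (Suc m). path_prob P i xs) = (\<Sum>(x,ys)\<in>A \<times> S m. path_prob P i (x#ys))"
    unfolding eq by (subst sum.reindex[OF inj]) (simp add: case_prod_unfold)
  also have "\<dots> = (\<Sum>x\<in>A. \<Sum>ys\<in>S m. P i x * path_prob P x ys)"
    by (subst sum.cartesian_product[symmetric]) simp
  also have "\<dots> = (\<Sum>x\<in>A. P i x * V P A x j (Suc m))"
    using Suc by (simp add: sum_distrib_left[symmetric] S_def)
  finally show ?case by (simp add: S_def)
qed

lemma V_insert:
  assumes "finite A" "n \<notin> A"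
  shows "V P (insert n A) i j (Suc m) =
         V P A i j (Suc m) + (\<Sum>t<m. V P A i n (Suc t) * V P (insert n A) n j (m - t))"
proof (induction m arbitrary: i)
  case 0 then show ?case by simp
next
  case (Suc m)
  have "V P (insert n A) i j (Suc (Suc m)) =
        P i n * V P (insert n A) n j (Suc m) + (\<Sum>x\<in>A. P i x * V P (insert n A) x j (Suc m))"
    using assms by simp
  also have "(\<Sum>x\<in>A. P i x * V P (insert n A) x j (Suc m)) =
     (\<Sum>x\<in>A. P i x * V P A x j (Suc m)) +
     (\<Sum>t<m. (\<Sum>x\<in>A. P i x * V P A x n (Suc t)) * V P (insert n A) n j (m - t))"
    by (simp add: Suc distrib_left sum.distrib sum_distrib_left sum_distrib_right sum.swap[of _ A] mult.assoc)
  also have "\<dots> = V P A i j (Suc (Suc m)) + (\<Sum>t<m. V P A i n (Suc (Suc t)) * V P (insert n A) n j (Suc m - Suc t))"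
    by simp
  finally show ?case
    by (simp add: sum.lessThan_Suc_shift del: sum.lessThan_Suc)
qed



lemma gth_N: "gth P N N = P" by (simp add: gth_def)

lemma gth_pred: "1 \<le> n \<Longrightarrow> n \<le> N \<Longrightarrow> gth P N (n - 1) = gth_step n (gth P N n)"
proof -
  assume "1 \<le> n" "n \<le> N"
  hence "N - (n - 1) = Suc (N - n)" "N - (N - n) = n" by auto
  thus ?thesis by (simp add: gth_def)
qed

lemma gth_pred_val: "1 \<le> n \<Longrightarrow> n \<le> N \<Longrightarrow>
   gth P N (n - 1) i j = gth P N n i j + gth P N n i n * gth P N n n j / gth_s P N n"
proof -
  assume a: "1 \<le> n" "n \<le> N"
  show ?thesis unfolding gth_pred[OF a] gth_step_def gth_s_def by simp
qed

definition Edges :: "nat \<Rightarrow> (nat \<Rightarrow> nat \<Rightarrow> real) \<Rightarrow> (nat \<times> nat) set" where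
  "Edges N P = {(a, b). a \<in> {1..N} \<and> b \<in> {1..N} \<and> P a b > 0}"

lemma reach:
  assumes nn: "\<forall>i\<in>{1..N}. \<forall>j\<in>{1..N}. P i j \<ge> 0" and n: "n \<le> N"
    and cb: "(c, b) \<in> (Edges N P)\<^sup>+" and b: "b \<in> {1..<n}"
  shows "(\<exists>j\<in>{1..<n}. \<exists>m. V P {Suc n..N} c j (Suc m) > 0) \<or>
         (\<exists>j\<in>{1..<n}. \<exists>m. V P {Suc n..N} n j (Suc m) > 0)"
  using cb
proof (induction rule: converse_trancl_induct)
  case (base y)
  hence "V P {Suc n..N} y b (Suc 0) > 0" by (simp add: Edges_def)
  then show ?case using b by blast
next
  case (step c d)
  have cd: "c \<in> {1..N}" "d \<in> {1..N}" "P c d > 0" using step.hyps(1) by (auto simp: Edges_def)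
  show ?case using step.IH
  proof
    assume "\<exists>j\<in>{1..<n}. \<exists>m. V P {Suc n..N} d j (Suc m) > 0"
    then obtain j m where j: "j \<in> {1..<n}" and pos: "V P {Suc n..N} d j (Suc m) > 0" by auto
    consider "d < n" | "d = n" | "d > n" by linarith
    then show ?case
    proof cases
      case 1
      hence "d \<in> {1..<n}" using cd by simp
      moreover have "V P {Suc n..N} c d (Suc 0) > 0" using cd by simp
      ultimately show ?thesis by blast
    next
      case 2 then show ?thesis using j pos by auto
    next
      case 3
      have dA: "d \<in> {Suc n..N}" using 3 cd by auto
      have "0 < P c d * V P {Suc n..N} d j (Suc m)" using cd pos by simp
      also have "\<dots> \<le> (\<Sum>x\<in>{Suc n..N}. P c x * V P {Suc n..N} x j (Suc m))"
      proof (rule member_le_sum[OF dA])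
        fix x assume x: "x \<in> {Suc n..N} - {d}"
        have "0 \<le> P c x" using nn cd x by auto
        moreover have "0 \<le> V P {Suc n..N} x j (Suc m)" by (rule V_nonneg[OF nn]) (use x j n in auto)
        ultimately show "0 \<le> P c x * V P {Suc n..N} x j (Suc m)" by simp
      qed simp
      finally have "V P {Suc n..N} c j (Suc (Suc m)) > 0" by simp
      then show ?thesis using j by blast
    qed
  qed simp
qed

definition Inv :: "nat \<Rightarrow> (nat \<Rightarrow> nat \<Rightarrow> real) \<Rightarrow> nat \<Rightarrow> bool" where
  "Inv N P n \<longleftrightarrow> (\<forall>i\<in>{1..N}. \<forall>j\<in>{1..N}. (\<lambda>k. V P {Suc n..N} i j (Suc k)) sums gth P N n i j)
                \<and> (\<forall>i\<in>{1..N}. (\<Sum>j=1..n. gth P N n i j) = 1)"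

lemma Inv_nonneg:
  assumes nn: "\<forall>i\<in>{1..N}. \<forall>j\<in>{1..N}. P i j \<ge> 0" and I: "Inv N P n" and ij: "i \<in> {1..N}" "j \<in> {1..N}"
  shows "gth P N n i j \<ge> 0"
proof -
  have "(\<lambda>k. V P {Suc n..N} i j (Suc k)) sums gth P N n i j" using I ij by (auto simp: Inv_def)
  moreover have "\<And>k. V P {Suc n..N} i j (Suc k) \<ge> 0" by (rule V_nonneg[OF nn]) (use ij in auto)
  ultimately show ?thesis by (metis sums_iff suminf_nonneg)
qed

lemma s_pos:
  assumes nn: "\<forall>i\<in>{1..N}. \<forall>j\<in>{1..N}. P i j \<ge> 0" and irr: "irreducible_matrix N P"
    and I: "Inv N P n" and n: "2 \<le> n" "n \<le> N"
  shows "gth_s P N n > 0"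
proof -
  have all: "\<forall>i\<in>{1..N}. \<forall>j\<in>{1..N}. (i,j) \<in> (Edges N P)\<^sup>+"
    using irr by (simp add: irreducible_matrix_def Edges_def)
  have "n \<in> {1..N}" "(1::nat) \<in> {1..N}" using n by auto
  hence "(n, 1) \<in> (Edges N P)\<^sup>+" using all by blast
  from reach[OF nn n(2) this] n obtain j m where j: "j \<in> {1..<n}" and pos: "V P {Suc n..N} n j (Suc m) > 0"
    by auto
  have js: "(\<lambda>k. V P {Suc n..N} n j (Suc k)) sums gth P N n n j" using I j n by (auto simp: Inv_def)
  have "gth P N n n j > 0"
    using suminf_pos2[of "\<lambda>k. V P {Suc n..N} n j (Suc k)" m] js pos
      V_nonneg[OF nn, of "{Suc n..N}" n j] j n by (auto simp: sums_iff)
  also have "gth P N n n j \<le> gth_s P N n"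
    unfolding gth_s_def by (rule member_le_sum[OF j]) (use Inv_nonneg[OF nn I] n in auto)
  finally show ?thesis .
qed

lemma row_split: "1 \<le> (n::nat) \<Longrightarrow> (\<Sum>j=1..n. f j) = (\<Sum>j=1..<n. f j) + (f n :: real)"
  by (metis Suc_le_D atLeastLessThanSuc_atLeastAtMost sum.atLeastLessThan_Suc)

lemma diag_eq:
  assumes I: "Inv N P n" and n: "1 \<le> n" "n \<le> N"
  shows "gth P N n n n = 1 - gth_s P N n"
  using I n row_split[of n "gth P N n n"] by (auto simp: Inv_def gth_s_def)



lemma inv_step:
  assumes nn: "\<forall>i\<in>{1..N}. \<forall>j\<in>{1..N}. P i j \<ge> 0" and irr: "irreducible_matrix N P"
    and I: "Inv N P n" and n: "2 \<le> n" "n \<le> N"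
  shows "Inv N P (n - 1)"
proof -
  define A where "A = {Suc n..N}"
  define p where "p = gth P N n"
  define s where "s = gth_s P N n"
  have fA: "finite A" and nA: "n \<notin> A" and AN: "A \<subseteq> {1..N}" by (auto simp: A_def)
  have A': "{Suc (n - 1)..N} = insert n A" using n by (auto simp: A_def)
  have spos: "s > 0" unfolding s_def by (rule s_pos[OF nn irr I n])
  have pnn: "p n n = 1 - s" unfolding p_def s_def by (rule diag_eq[OF I]) (use n in auto)
  have xs: "(\<lambda>k. V P A i j (Suc k)) sums p i j" if "i \<in> {1..N}" "j \<in> {1..N}" for i j
    using I that by (simp add: Inv_def A_def p_def)
  have V0: "0 \<le> V P B i j k" if "B \<subseteq> {1..N}" "i \<in> {1..N}" "j \<in> {1..N}" for B i j k
    by (rule V_nonneg[OF nn that])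
  have nN: "n \<in> {1..N}" using n by auto
  have A'N: "insert n A \<subseteq> {1..N}" using AN nN by auto
  have rec: "V P (insert n A) i j (Suc (Suc k)) = V P A i j (Suc (Suc k)) +
      (\<Sum>t\<le>k. V P A i n (Suc t) * V P (insert n A) n j (Suc (k - t)))" for i j k
  proof -
    have "V P (insert n A) i j (Suc (Suc k)) = V P A i j (Suc (Suc k)) +
      (\<Sum>t<Suc k. V P A i n (Suc t) * V P (insert n A) n j (Suc k - t))"
      by (rule V_insert[OF fA nA])
    also have "(\<Sum>t<Suc k. V P A i n (Suc t) * V P (insert n A) n j (Suc k - t)) =
       (\<Sum>t\<le>k. V P A i n (Suc t) * V P (insert n A) n j (Suc (k - t)))"
      by (rule sum.cong) (auto simp: Suc_diff_le)
    finally show ?thesis .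
  qed
  have bsums: "(\<lambda>k. V P (insert n A) n j (Suc k)) sums (p n j / s)" if j: "j \<in> {1..N}" for j
  proof -
    have sm: "summable (\<lambda>k. V P (insert n A) n j (Suc k))"
    proof (rule conv_summable[where a="\<lambda>k. V P A n n (Suc k)" and c="p n n"
          and x="\<lambda>k. V P A n j (Suc k)"])
      show "(\<lambda>k. V P A n n (Suc k)) sums p n n" by (rule xs[OF nN nN])
      show "summable (\<lambda>k. V P A n j (Suc k))" using xs[OF nN j] by (simp add: sums_iff)
      show "p n n < 1" using pnn spos by simp
    qed (use V0 AN A'N nN j rec in auto)
    then obtain \<beta> where bs: "(\<lambda>k. V P (insert n A) n j (Suc k)) sums \<beta>" by (auto simp: summable_def)
    have "(\<lambda>k. V P (insert n A) n j (Suc k)) sums (p n j + p n n * \<beta>)"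
      by (rule conv_sums[OF _ _ xs[OF nN nN] bs xs[OF nN j]]) (use V0 AN A'N nN j rec in auto)
    hence "\<beta> = p n j + p n n * \<beta>" using bs sums_unique2 by blast
    hence "s * \<beta> = p n j" using pnn by (simp add: algebra_simps)
    hence "\<beta> = p n j / s" using spos by (simp add: field_simps)
    thus ?thesis using bs by simp
  qed
  have ysums: "(\<lambda>k. V P (insert n A) i j (Suc k)) sums gth P N (n - 1) i j"
    if i: "i \<in> {1..N}" and j: "j \<in> {1..N}" for i j
  proof -
    have "(\<lambda>k. V P (insert n A) i j (Suc k)) sums (p i j + p i n * (p n j / s))"
      by (rule conv_sums[OF _ _ xs[OF i nN] bsums[OF j] xs[OF i j]]) (use V0 AN A'N nN i j rec in auto)
    moreover have "gth P N (n - 1) i j = p i j + p i n * (p n j / s)"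
      using gth_pred_val[of n N P i j] n by (simp add: p_def s_def)
    ultimately show ?thesis by simp
  qed
  have rows: "(\<Sum>j=1..n-1. gth P N (n - 1) i j) = 1" if i: "i \<in> {1..N}" for i
  proof -
    have r: "(\<Sum>j=1..n. p i j) = 1" using I i by (simp add: Inv_def p_def)
    have sdef: "s = (\<Sum>j=1..<n. p n j)" by (simp add: s_def p_def gth_s_def)
    have "{1..n-1} = {1..<n}" using n by auto
    hence "(\<Sum>j=1..n-1. gth P N (n - 1) i j) = (\<Sum>j=1..<n. p i j + p i n * p n j / s)"
      using gth_pred_val[of n N P i] n by (simp add: p_def s_def)
    also have "\<dots> = (\<Sum>j=1..<n. p i j) + p i n * s / s"
      by (simp add: sum.distrib sum_divide_distrib[symmetric] sum_distrib_left[symmetric] sdef)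
    also have "\<dots> = (\<Sum>j=1..n. p i j)" using spos row_split[of n "p i"] n by simp
    finally show ?thesis using r by simp
  qed
  show ?thesis unfolding Inv_def A' using ysums rows by auto
qed

lemma inv_all:
  assumes st: "stochastic_matrix N P" and irr: "irreducible_matrix N P"
    and n: "1 \<le> n" "n \<le> N"
  shows "Inv N P n"
proof -
  have nn: "\<forall>i\<in>{1..N}. \<forall>j\<in>{1..N}. P i j \<ge> 0" using st by (simp add: stochastic_matrix_def)
  have "d < N \<Longrightarrow> Inv N P (N - d)" for d
  proof (induction d)
    case 0
    have "(\<lambda>k. V P {Suc N..N} i j (Suc k)) sums P i j" for i j
    proof -
      have "(\<lambda>k. V P {Suc N..N} i j (Suc k)) = (\<lambda>k. if k = 0 then P i j else 0)"
      proof
        fix k show "V P {Suc N..N} i j (Suc k) = (if k = 0 then P i j else 0)"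
          by (cases k) auto
      qed
      thus ?thesis using sums_single[of 0 "\<lambda>_. P i j"] by simp
    qed
    then show ?case using st by (simp add: Inv_def gth_N stochastic_matrix_def)
  next
    case (Suc d)
    have "Inv N P (N - d - 1)"
      by (rule inv_step[OF nn irr Suc.IH]) (use Suc.prems in auto)
    thus ?case by (simp add: diff_Suc)
  qed
  from this[of "N - n"] n show ?thesis by simp
qed



lemma visit_eq:
  assumes "n \<in> {1..N}"
  shows "visit_prob N P n i (Suc m) = V P {n..N} i n (Suc m)"
proof -
  have "{xs. length xs = Suc m \<and> set xs \<subseteq> {1..N} \<and> set xs \<inter> {1..<n} = {} \<and> last xs = n}
      = {xs. length xs = Suc m \<and> set (butlast xs) \<subseteq> {n..N} \<and> last xs = n}" (is "?L = ?R")
  proof (rule set_eqI, rule iffI)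
    fix xs assume a: "xs \<in> ?L"
    hence "xs \<noteq> []" by auto
    from set_butlast_last[OF this] a show "xs \<in> ?R" by (force simp: subset_iff disjoint_iff)
  next
    fix xs assume a: "xs \<in> ?R"
    hence "xs \<noteq> []" by auto
    from set_butlast_last[OF this] a assms show "xs \<in> ?L" by (force simp: subset_iff)
  qed
  thus ?thesis unfolding visit_prob_def by (simp add: paths_eq_V)
qed

lemma exit_eq:
  assumes "j \<in> {1..N}" "n \<in> {1..N}"
  shows "exit_prob N P n j (Suc m) = V P {n..N} n j (Suc m)"
proof -
  have "{xs. length xs = Suc m \<and> set xs \<subseteq> {1..N} \<and> set (butlast xs) \<inter> {1..<n} = {} \<and> last xs = j}
      = {xs. length xs = Suc m \<and> set (butlast xs) \<subseteq> {n..N} \<and> last xs = j}" (is "?L = ?R")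
  proof (rule set_eqI, rule iffI)
    fix xs assume a: "xs \<in> ?L"
    hence "xs \<noteq> []" by auto
    from set_butlast_last[OF this] a show "xs \<in> ?R" by (force simp: subset_iff disjoint_iff)
  next
    fix xs assume a: "xs \<in> ?R"
    hence "xs \<noteq> []" by auto
    from set_butlast_last[OF this] a assms show "xs \<in> ?L" by (force simp: subset_iff)
  qed
  thus ?thesis unfolding exit_prob_def by (simp add: paths_eq_V)
qed

lemma telescope:
  assumes "d \<le> N"
  shows "gth P N (N - d) i j = P i j +
     (\<Sum>k\<in>{N - d<..N}. gth P N k i k * gth P N k k j / gth_s P N k)"
  using assms
proof (induction d)
  case 0 then show ?case by (simp add: gth_N)
next
  case (Suc d)
  have e: "N - Suc d = N - d - 1" by simp
  have ins: "{N - Suc d<..N} = insert (N - d) {N - d<..N}" using Suc.prems by auto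
  show ?case unfolding e
    using gth_pred_val[of "N - d" N P i j] Suc by (simp add: ins)
qed

theorem mainTheorem3:
  fixes N :: nat and P :: "nat \<Rightarrow> nat \<Rightarrow> real"
  assumes "N \<ge> 1"
    and "stochastic_matrix N P"
    and "irreducible_matrix N P"
  shows "(\<forall>n\<in>{2..N}. \<forall>i\<in>{1..n-1}. r_visits N P i n = gth P N n i n / gth_s P N n)
       \<and> (\<forall>n\<in>{2..N}. \<forall>j\<in>{1..n-1}. g_exit N P n j = gth P N n n j / gth_s P N n)
       \<and> gth P N 1 1 1 = 1
       \<and> (\<forall>i\<in>{1..N}. \<forall>j\<in>{1..N}.
            idm i j - P i j =
            matmul N (matmul N (\<lambda>a b. idm a b - R_U N P a b) (\<lambda>a b. idm a b - Psi_D N P a b))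
                     (\<lambda>a b. idm a b - G_L N P a b) i j)"
proof -
  note st = assms(2) and irr = assms(3)
  have nn: "\<forall>i\<in>{1..N}. \<forall>j\<in>{1..N}. P i j \<ge> 0" using st by (simp add: stochastic_matrix_def)
  have Iv: "Inv N P n" if "n \<in> {1..N}" for n using inv_all[OF st irr] that by auto
  have spos: "gth_s P N k > 0" if "k \<in> {2..N}" for k
    using s_pos[OF nn irr Iv] that by auto
  have dg: "gth P N k k k = 1 - gth_s P N k" if "k \<in> {1..N}" for k
    using diag_eq[OF Iv] that by auto
  have key: "gth P N (n - 1) i j = gth P N n i j / gth_s P N n"
    if n: "n \<in> {2..N}" and "i = n \<or> j = n" for n i j
  proof -
    have e: "gth P N n n n = 1 - gth_s P N n" using dg n by auto
    have sp: "gth_s P N n > 0" using spos n by auto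
    have "gth P N (n - 1) i j = gth P N n i j + gth P N n i n * gth P N n n j / gth_s P N n"
      using gth_pred_val[of n N P i j] n by auto
    also have "\<dots> = gth P N n i j / gth_s P N n"
    proof (cases "i = n")
      case True
      show ?thesis unfolding True e using sp by (simp add: field_simps)
    next
      case False
      hence "j = n" using that(2) by simp
      show ?thesis unfolding \<open>j = n\<close> e using sp by (simp add: field_simps)
    qed
    finally show ?thesis .
  qed
  have rv: "r_visits N P i n = gth P N n i n / gth_s P N n" if n: "n \<in> {2..N}" and i: "i \<in> {1..n-1}" for n i
  proof -
    have n1: "n - 1 \<in> {1..N}" "{Suc (n - 1)..N} = {n..N}" using n by auto
    have "(\<lambda>k. V P {n..N} i n (Suc k)) sums gth P N (n - 1) i n"
      using Iv[OF n1(1)] n i unfolding Inv_def n1(2) by auto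
    moreover have "(\<lambda>m. visit_prob N P n i (Suc m)) = (\<lambda>k. V P {n..N} i n (Suc k))"
      using visit_eq[of n N P i] n by auto
    ultimately have "r_visits N P i n = gth P N (n - 1) i n"
      unfolding r_visits_def by (simp add: sums_iff)
    thus ?thesis using key[OF n] by simp
  qed
  have gv: "g_exit N P n j = gth P N n n j / gth_s P N n" if n: "n \<in> {2..N}" and j: "j \<in> {1..n-1}" for n j
  proof -
    have n1: "n - 1 \<in> {1..N}" "{Suc (n - 1)..N} = {n..N}" using n by auto
    have "(\<lambda>k. V P {n..N} n j (Suc k)) sums gth P N (n - 1) n j"
      using Iv[OF n1(1)] n j unfolding Inv_def n1(2) by auto
    moreover have "(\<lambda>m. exit_prob N P n j (Suc m)) = (\<lambda>k. V P {n..N} n j (Suc k))"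
      using exit_eq[of j N n P] n j by auto
    ultimately have "g_exit N P n j = gth P N (n - 1) n j"
      unfolding g_exit_def by (simp add: sums_iff)
    thus ?thesis using key[OF n] by simp
  qed
  have g111: "gth P N 1 1 1 = 1"
    using Iv[of 1] assms(1) by (simp add: Inv_def)
  have fact: "idm i j - P i j =
            matmul N (matmul N (\<lambda>a b. idm a b - R_U N P a b) (\<lambda>a b. idm a b - Psi_D N P a b))
                     (\<lambda>a b. idm a b - G_L N P a b) i j" if i: "i \<in> {1..N}" and j: "j \<in> {1..N}" for i j
  proof -
    define t where "t k = (idm i k - R_U N P i k) * (1 - gth P N k k k) * (idm k j - G_L N P k j)" for k
    have inner: "matmul N (\<lambda>a b. idm a b - R_U N P a b) (\<lambda>a b. idm a b - Psi_D N P a b) i k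
        = (idm i k - R_U N P i k) * (1 - gth P N k k k)" if k: "k \<in> {1..N}" for k
    proof -
      have pw: "\<And>l. (idm i l - R_U N P i l) * (idm l k - Psi_D N P l k) =
            (if l = k then (idm i k - R_U N P i k) * (1 - gth P N k k k) else 0)"
        by (auto simp: idm_def Psi_D_def)
      hence "matmul N (\<lambda>a b. idm a b - R_U N P a b) (\<lambda>a b. idm a b - Psi_D N P a b) i k
          = (\<Sum>l=1..N. if l = k then (idm i k - R_U N P i k) * (1 - gth P N k k k) else 0)"
        unfolding matmul_def by (simp only: pw)
      thus ?thesis using k by simp
    qed
    have prod: "matmul N (matmul N (\<lambda>a b. idm a b - R_U N P a b) (\<lambda>a b. idm a b - Psi_D N P a b))
                     (\<lambda>a b. idm a b - G_L N P a b) i j = (\<Sum>k=1..N. t k)"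
      unfolding matmul_def[of N "matmul N _ _"] t_def using inner by (intro sum.cong) auto
    define m where "m = max i j"
    have m: "m \<in> {1..N}" using i j by (auto simp: m_def)
    have split: "{1..N} = {1..<m} \<union> insert m {m<..N}" using m by auto
    have t0: "t k = 0" if "k \<in> {1..<m}" for k
      using that by (auto simp: t_def m_def idm_def R_U_def G_L_def max_def split: if_splits)
    have tbig: "t k = gth P N k i k * gth P N k k j / gth_s P N k" if k: "k \<in> {m<..N}" for k
    proof -
      have k2: "k \<in> {2..N}" using k m by auto
      have ik: "i \<in> {1..k-1}" "j \<in> {1..k-1}" "i < k" "j < k" using k i j by (auto simp: m_def)
      have "t k = (- (gth P N k i k / gth_s P N k)) * gth_s P N k * (- (gth P N k k j / gth_s P N k))"
        unfolding t_def using ik rv[OF k2 ik(1)] gv[OF k2 ik(2)] dg[of k] k2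
        by (simp add: idm_def R_U_def G_L_def)
      thus ?thesis using spos[OF k2] by (simp add: field_simps power2_eq_square)
    qed
    have tm: "t m = idm i j - gth P N m i j"
    proof -
      consider "i = j" | "i < j" | "j < i" by linarith
      then show ?thesis
      proof cases
        case 1 then show ?thesis by (simp add: t_def m_def idm_def R_U_def G_L_def)
      next
        case 2
        hence mj: "m = j" by (simp add: m_def)
        have j2: "j \<in> {2..N}" "i \<in> {1..j-1}" using 2 i j by auto
        show ?thesis unfolding t_def mj using 2 rv[OF j2] dg[of j] j2 spos[OF j2(1)]
          by (simp add: idm_def R_U_def G_L_def)
      next
        case 3
        hence mi: "m = i" by (simp add: m_def)
        have i2: "i \<in> {2..N}" "j \<in> {1..i-1}" using 3 i j by auto
        show ?thesis unfolding t_def mi using 3 gv[OF i2] dg[of i] i2 spos[OF i2(1)]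
          by (simp add: idm_def R_U_def G_L_def)
      qed
    qed
    have "(\<Sum>k=1..N. t k) = (\<Sum>k\<in>{1..<m}. t k) + (t m + (\<Sum>k\<in>{m<..N}. t k))"
      unfolding split by (subst sum.union_disjoint) auto
    also have "\<dots> = idm i j - gth P N m i j + (\<Sum>k\<in>{m<..N}. gth P N k i k * gth P N k k j / gth_s P N k)"
      using t0 tbig tm by simp
    also have "\<dots> = idm i j - P i j"
      using telescope[of "N - m" N P i j] m by simp
    finally show ?thesis using prod by simp
  qed
  show ?thesis using rv gv g111 fact by blast
qed

end
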